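(* The following two statements are equivalent: (a) Every 3-connected cubic graph $G$ admits a proper $5$-edge-coloring $c$ with $|N_G(c)|\le 7$. (b) There exists a sublinear function $f:\mathbb{N}\to\mathbb{N}$ such that every 3-connected cubic graph $G$ admits a proper $5$-edge-coloring $c$ with $|N_G(c)|\le f(|V(G)|)$.
   Context: Graphs are finite, undirected, loopless, and may contain parallel edges. A proper $k$-edge-coloring of $G$ is a map $c:E(G)\to\{1,\dots,k\}$ with adjacent edges receiving different colors. For such $c$ and a vertex $v$, $S_c(v)$ is the set of colors on edges incident to $v$. An edge $uv$ of a cubic graph is poor if $|S_c(u)\cup S_c(v)|=3$, rich if $|S_c(u)\cup S_c(v)|=5$, and abnormal if it is neither poor nor rich. $N_G(c)$ denotes the set of abnormal edges of $G$ with respect to $c$. A function $f:\mathbb{N}\to\mathbb{N}$ is sublinear if $\lim_{n\to\infty} f(n)/n=0$. *)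

theory Defs
  imports Complex_Main
begin

text \<open>Parallel edges are distinct elements of E with the same ends.\<close>

definition multigraph :: "'v set \<Rightarrow> 'e set \<Rightarrow> ('e \<Rightarrow> 'v set) \<Rightarrow> bool" where
  "multigraph V E ends \<longleftrightarrow> finite V \<and> finite E \<and>
     (\<forall>e\<in>E. ends e \<subseteq> V \<and> card (ends e) = 2)"

definition inc_edges :: "'e set \<Rightarrow> ('e \<Rightarrow> 'v set) \<Rightarrow> 'v \<Rightarrow> 'e set" where
  "inc_edges E ends v = {e \<in> E. v \<in> ends e}"

definition cubic :: "'v set \<Rightarrow> 'e set \<Rightarrow> ('e \<Rightarrow> 'v set) \<Rightarrow> bool" where
  "cubic V E ends \<longleftrightarrow> multigraph V E ends \<and> (\<forall>v\<in>V. card (inc_edges E ends v) = 3)"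

definition adj_in :: "'v set \<Rightarrow> 'e set \<Rightarrow> ('e \<Rightarrow> 'v set) \<Rightarrow> ('v \<times> 'v) set" where
  "adj_in W E ends = {(u, v). u \<in> W \<and> v \<in> W \<and> (\<exists>e\<in>E. ends e = {u, v})}"

definition connected_induced :: "'v set \<Rightarrow> 'e set \<Rightarrow> ('e \<Rightarrow> 'v set) \<Rightarrow> bool" where
  "connected_induced W E ends \<longleftrightarrow> W \<noteq> {} \<and> (\<forall>u\<in>W. \<forall>v\<in>W. (u, v) \<in> (adj_in W E ends)\<^sup>*)"

definition k_connected :: "nat \<Rightarrow> 'v set \<Rightarrow> 'e set \<Rightarrow> ('e \<Rightarrow> 'v set) \<Rightarrow> bool" where
  "k_connected k V E ends \<longleftrightarrow> multigraph V E ends \<and> card V > k \<and>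
     (\<forall>X \<subseteq> V. card X < k \<longrightarrow> connected_induced (V - X) E ends)"

definition proper_edge_coloring :: "nat \<Rightarrow> 'e set \<Rightarrow> ('e \<Rightarrow> 'v set) \<Rightarrow> ('e \<Rightarrow> nat) \<Rightarrow> bool" where
  "proper_edge_coloring k E ends c \<longleftrightarrow>
     (\<forall>e\<in>E. c e \<in> {1..k}) \<and>
     (\<forall>e\<in>E. \<forall>e'\<in>E. e \<noteq> e' \<and> ends e \<inter> ends e' \<noteq> {} \<longrightarrow> c e \<noteq> c e')"

definition color_set :: "'e set \<Rightarrow> ('e \<Rightarrow> 'v set) \<Rightarrow> ('e \<Rightarrow> nat) \<Rightarrow> 'v \<Rightarrow> nat set" where
  "color_set E ends c v = c ` inc_edges E ends v"

definition poor_edge :: "'e set \<Rightarrow> ('e \<Rightarrow> 'v set) \<Rightarrow> ('e \<Rightarrow> nat) \<Rightarrow> 'e \<Rightarrow> bool" where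
  "poor_edge E ends c e \<longleftrightarrow> card (\<Union>x\<in>ends e. color_set E ends c x) = 3"

definition rich_edge :: "'e set \<Rightarrow> ('e \<Rightarrow> 'v set) \<Rightarrow> ('e \<Rightarrow> nat) \<Rightarrow> 'e \<Rightarrow> bool" where
  "rich_edge E ends c e \<longleftrightarrow> card (\<Union>x\<in>ends e. color_set E ends c x) = 5"

definition abnormal_edges :: "'e set \<Rightarrow> ('e \<Rightarrow> 'v set) \<Rightarrow> ('e \<Rightarrow> nat) \<Rightarrow> 'e set" where
  "abnormal_edges E ends c = {e \<in> E. \<not> poor_edge E ends c e \<and> \<not> rich_edge E ends c e}"

definition sublinear :: "(nat \<Rightarrow> nat) \<Rightarrow> bool" where
  "sublinear f \<longleftrightarrow> (\<lambda>n. real (f n) / real n) \<longlonglongrightarrow> 0"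

end

theory Submission
  imports Defs "HOL-Library.Countable"
begin

definition oth :: "('e \<Rightarrow> 'v set) \<Rightarrow> 'v \<Rightarrow> 'e \<Rightarrow> 'v" where
  "oth ends v e = the_elem (ends e - {v})"

lemma oth_eq: "ends e = {x, y} \<Longrightarrow> x \<noteq> y \<Longrightarrow> oth ends x e = y"
  unfolding oth_def by (metis Diff_insert_absorb insert_Diff_if singletonD the_elem_eq insertI1)

lemma mg_ends:
  assumes "multigraph V E ends" "e \<in> E"
  obtains x y where "ends e = {x, y}" "x \<noteq> y" "x \<in> V" "y \<in> V"
  using assms unfolding multigraph_def by (metis card_2_iff insert_subset)

lemma mg_inc:
  assumes "multigraph V E ends" "e \<in> inc_edges E ends v"
  shows "ends e = {v, oth ends v e}" "oth ends v e \<noteq> v" "oth ends v e \<in> V" "v \<in> V" "e \<in> E"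
proof -
  have e: "e \<in> E" "v \<in> ends e" using assms(2) unfolding inc_edges_def by auto
  obtain x y where xy: "ends e = {x, y}" "x \<noteq> y" "x \<in> V" "y \<in> V" using mg_ends[OF assms(1) e(1)] by blast
  have "ends e = {v, oth ends v e} \<and> oth ends v e \<noteq> v \<and> oth ends v e \<in> V \<and> v \<in> V"
  proof (cases "v = x")
    case True thus ?thesis using xy oth_eq[of ends e x y] by auto
  next
    case False hence "v = y" using e xy by auto
    thus ?thesis using xy oth_eq[of ends e y x] by auto
  qed
  thus "ends e = {v, oth ends v e}" "oth ends v e \<noteq> v" "oth ends v e \<in> V" "v \<in> V" "e \<in> E"
    using e by auto
qed

lemma mg_fin_inc: "multigraph V E ends \<Longrightarrow> finite (inc_edges E ends v)"
  unfolding multigraph_def inc_edges_def by auto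

lemma adj_sym: "(a, b) \<in> adj_in W E ends \<Longrightarrow> (b, a) \<in> adj_in W E ends"
  unfolding adj_in_def by (auto simp: insert_commute)

lemma adj_rtr_sym: "(a, b) \<in> (adj_in W E ends)\<^sup>* \<Longrightarrow> (b, a) \<in> (adj_in W E ends)\<^sup>*"
proof (induction rule: rtrancl_induct)
  case base thus ?case by simp
next
  case (step y z) thus ?case using adj_sym by (metis converse_rtrancl_into_rtrancl)
qed

lemma rtr_map:
  assumes "(a, b) \<in> R\<^sup>*" "\<And>x y. (x, y) \<in> R \<Longrightarrow> (h x, h y) \<in> S"
  shows "(h a, h b) \<in> S\<^sup>*"
  using assms(1)
proof (induction rule: rtrancl_induct)
  case base thus ?case by simp
next
  case (step y z) thus ?case using assms(2) by (meson rtrancl.rtrancl_into_rtrancl)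
qed

lemma kconn_conn:
  assumes "k_connected k V E ends" "X \<subseteq> V" "card X < k"
  shows "connected_induced (V - X) E ends"
  using assms unfolding k_connected_def by auto

lemma cubic_inc3: "cubic V E ends \<Longrightarrow> v \<in> V \<Longrightarrow> card (inc_edges E ends v) = 3"
  unfolding cubic_def by auto

lemma cubic_mg: "cubic V E ends \<Longrightarrow> multigraph V E ends"
  unfolding cubic_def by auto

lemma simple3:
  assumes cub: "cubic V E ends" and kc: "k_connected 3 V E ends"
    and ee: "e \<in> E" "e' \<in> E" "e \<noteq> e'" "ends e = ends e'"
  shows False
proof -
  have mg: "multigraph V E ends" using cub cubic_mg by blast
  obtain u w where uw: "ends e = {u, w}" "u \<noteq> w" "u \<in> V" "w \<in> V" using mg_ends[OF mg ee(1)] by blast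
  have fin: "finite (inc_edges E ends w)" using mg_fin_inc[OF mg] .
  have c3: "card (inc_edges E ends w) = 3" using cubic_inc3[OF cub uw(4)] .
  have ein: "e \<in> inc_edges E ends w" "e' \<in> inc_edges E ends w" using ee uw unfolding inc_edges_def by auto
  have "\<not> inc_edges E ends w \<subseteq> {e, e'}"
  proof
    assume "inc_edges E ends w \<subseteq> {e, e'}"
    hence "card (inc_edges E ends w) \<le> card {e, e'}" by (intro card_mono) auto
    thus False using c3 by (cases "e = e'") auto
  qed
  then obtain k where k: "k \<in> inc_edges E ends w" "k \<noteq> e" "k \<noteq> e'" by blast
  let ?w' = "oth ends w k"
  have kk: "ends k = {w, ?w'}" "?w' \<noteq> w" "?w' \<in> V" using mg_inc[OF mg k(1)] by auto
  define X where "X = {u, ?w'}"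
  have X: "X \<subseteq> V" "card X < 3" unfolding X_def using uw kk by (auto simp: card_insert_if)
  have con: "connected_induced (V - X) E ends" using kconn_conn[OF kc X] .
  have "card V > 3" using kc unfolding k_connected_def by auto
  have "card (V - X) \<ge> card V - card X" by (simp add: diff_card_le_card_Diff X_def)
  hence "card (V - X) \<ge> 2" using \<open>card V > 3\<close> X(2) by linarith
  have "\<not> V - X \<subseteq> {w}"
  proof
    assume "V - X \<subseteq> {w}"
    hence "card (V - X) \<le> 1" using card_mono[of "{w}" "V - X"] by auto
    thus False using \<open>card (V - X) \<ge> 2\<close> by linarith
  qed
  then obtain z where z: "z \<in> V - X" "z \<noteq> w" by blast
  have wW: "w \<in> V - X" using uw kk unfolding X_def by auto
  have "(w, z) \<in> (adj_in (V - X) E ends)\<^sup>*" using con wW z unfolding connected_induced_def by blast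
  then obtain t where t: "(w, t) \<in> adj_in (V - X) E ends" using z(2)
    by (metis converse_rtranclE)
  then obtain g where g: "g \<in> E" "ends g = {w, t}" "t \<in> V - X" unfolding adj_in_def by auto
  have gin: "g \<in> inc_edges E ends w" using g unfolding inc_edges_def by auto
  have "g \<in> {e, e', k}"
  proof (rule ccontr)
    assume "g \<notin> {e, e', k}"
    hence "{e, e', k, g} \<subseteq> inc_edges E ends w" using ein k gin by auto
    hence "card {e, e', k, g} \<le> 3" using card_mono[OF fin] c3 by metis
    moreover have "card {e, e', k, g} = 4" using \<open>g \<notin> {e, e', k}\<close> ee k by auto
    ultimately show False by simp
  qed
  moreover have "t \<noteq> w"
  proof
    assume "t = w"
    hence "card (ends g) = 1" using g by simp
    thus False using g mg unfolding multigraph_def by auto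
  qed
  moreover have "u \<notin> V - X" "?w' \<notin> V - X" unfolding X_def by auto
  ultimately show False using g uw kk ee by (auto simp: doubleton_eq_iff)
qed

locale iso =
  fixes V :: "'v set" and E :: "'e set" and ends :: "'e \<Rightarrow> 'v set"
    and \<phi> :: "'v \<Rightarrow> 'w" and \<psi> :: "'e \<Rightarrow> 'f" and ends' :: "'f \<Rightarrow> 'w set"
  assumes inj\<phi>: "inj \<phi>" and inj\<psi>: "inj \<psi>" and ends': "\<And>e. ends' (\<psi> e) = \<phi> ` ends e"
begin

lemma mg: "multigraph V E ends \<Longrightarrow> multigraph (\<phi> ` V) (\<psi> ` E) ends'"
  unfolding multigraph_def using ends' inj\<phi>
  by (auto simp: card_image inj_on_subset[OF inj\<phi>] image_mono)

lemma inc: "inc_edges (\<psi> ` E) ends' (\<phi> x) = \<psi> ` inc_edges E ends x"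
  unfolding inc_edges_def using ends' inj\<phi> by (auto simp: inj_image_mem_iff)

lemma cub: "cubic V E ends \<Longrightarrow> cubic (\<phi> ` V) (\<psi> ` E) ends'"
  unfolding cubic_def using mg inc inj\<psi>
  by (auto simp: card_image inj_on_subset[OF inj\<psi>])

lemma adj: "(a, b) \<in> adj_in W E ends \<Longrightarrow> (\<phi> a, \<phi> b) \<in> adj_in (\<phi> ` W) (\<psi> ` E) ends'"
  unfolding adj_in_def using ends' by auto (metis image_empty image_insert)

lemma kconn: "k_connected k V E ends \<Longrightarrow> k_connected k (\<phi> ` V) (\<psi> ` E) ends'"
proof -
  assume kc: "k_connected k V E ends"
  have m: "multigraph (\<phi> ` V) (\<psi> ` E) ends'" using kc mg unfolding k_connected_def by auto
  have cV: "card (\<phi> ` V) = card V" using inj\<phi> by (simp add: card_image inj_on_subset)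
  have "connected_induced (\<phi> ` V - X') (\<psi> ` E) ends'" if X': "X' \<subseteq> \<phi> ` V" "card X' < k" for X'
  proof -
    obtain X where X: "X \<subseteq> V" "X' = \<phi> ` X" using X' subset_image_iff by metis
    have "card X' = card X" using X inj\<phi> by (simp add: card_image inj_on_subset)
    hence ci: "connected_induced (V - X) E ends" using kc X X' unfolding k_connected_def by auto
    have eq: "\<phi> ` V - X' = \<phi> ` (V - X)" using X inj\<phi> by (simp add: image_set_diff)
    show ?thesis unfolding eq connected_induced_def
    proof (intro conjI ballI)
      show "\<phi> ` (V - X) \<noteq> {}" using ci unfolding connected_induced_def by auto
    next
      fix u' w' assume "u' \<in> \<phi> ` (V - X)" "w' \<in> \<phi> ` (V - X)"
      then obtain u w where uw: "u \<in> V - X" "w \<in> V - X" "u' = \<phi> u" "w' = \<phi> w" by auto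
      have "(u, w) \<in> (adj_in (V - X) E ends)\<^sup>*" using ci uw unfolding connected_induced_def by auto
      from rtr_map[OF this adj] show "(u', w') \<in> (adj_in (\<phi> ` (V - X)) (\<psi> ` E) ends')\<^sup>*"
        using uw by simp
    qed
  qed
  thus ?thesis using kc m cV unfolding k_connected_def by auto
qed

lemma col: "proper_edge_coloring k (\<psi> ` E) ends' c \<Longrightarrow> proper_edge_coloring k E ends (c \<circ> \<psi>)"
  unfolding proper_edge_coloring_def using ends' inj\<psi> inj\<phi>
  by (auto simp: inj_eq) (metis (no_types, lifting) disjoint_iff image_eqI inj_eq inj\<psi>)

lemma cs: "color_set E ends (c \<circ> \<psi>) x = color_set (\<psi> ` E) ends' c (\<phi> x)"
  unfolding color_set_def inc by (simp add: image_comp)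

lemma abn: "abnormal_edges (\<psi> ` E) ends' c = \<psi> ` abnormal_edges E ends (c \<circ> \<psi>)"
proof -
  have u: "(\<Union>x\<in>ends' (\<psi> e). color_set (\<psi> ` E) ends' c x) = (\<Union>x\<in>ends e. color_set E ends (c \<circ> \<psi>) x)" for e
    unfolding ends' cs by simp
  show ?thesis unfolding abnormal_edges_def poor_edge_def rich_edge_def
    using u by auto
qed

lemma card_abn: "card (abnormal_edges (\<psi> ` E) ends' c) = card (abnormal_edges E ends (c \<circ> \<psi>))"
  unfolding abn using inj\<psi> by (simp add: card_image inj_on_subset)

end

locale repl =
  fixes VG EG :: "nat set" and eG :: "nat \<Rightarrow> nat set" and v :: nat
    and VB EB :: "nat set" and eB :: "nat \<Rightarrow> nat set" and \<sigma> :: "nat \<Rightarrow> nat \<Rightarrow> nat"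
  assumes cG: "cubic VG EG eG" and kG: "k_connected 3 VG EG eG" and vV: "v \<in> VG"
    and cB: "cubic VB EB eB" and kB: "k_connected 3 VB EB eB"
    and \<sigma>bij: "\<And>b. b \<in> VB \<Longrightarrow> bij_betw (\<sigma> b) (inc_edges EB eB b) (inc_edges EG eG v)"
begin

abbreviation "IG \<equiv> inc_edges EG eG"
abbreviation "IB \<equiv> inc_edges EB eB"

definition port where "port b f = (b, oth eG v (\<sigma> b f))"
definition VH :: "(nat \<times> nat) set" where "VH = VB \<times> (VG - {v})"
definition EH :: "(nat \<times> nat + nat) set" where "EH = Inl ` (VB \<times> (EG - IG v)) \<union> Inr ` EB"
fun eH :: "nat \<times> nat + nat \<Rightarrow> (nat \<times> nat) set" where
  "eH (Inl (b, e)) = Pair b ` eG e" | "eH (Inr f) = (\<lambda>b. port b f) ` eB f"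

lemma mgG: "multigraph VG EG eG" using cG cubic_mg by blast
lemma mgB: "multigraph VB EB eB" using cB cubic_mg by blast

lemma \<sigma>_in: "b \<in> VB \<Longrightarrow> f \<in> IB b \<Longrightarrow> \<sigma> b f \<in> IG v"
  by (rule bij_betw_apply[OF \<sigma>bij])

lemma \<sigma>_ends: "b \<in> VB \<Longrightarrow> f \<in> IB b \<Longrightarrow> eG (\<sigma> b f) = {v, oth eG v (\<sigma> b f)} \<and>
   oth eG v (\<sigma> b f) \<noteq> v \<and> oth eG v (\<sigma> b f) \<in> VG \<and> \<sigma> b f \<in> EG"
proof -
  assume a: "b \<in> VB" "f \<in> IB b"
  show ?thesis using mg_inc[OF mgG \<sigma>_in[OF a]] by simp
qed

lemma port_VH: "b \<in> VB \<Longrightarrow> f \<in> IB b \<Longrightarrow> port b f \<in> VH"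
  using \<sigma>_ends unfolding port_def VH_def by auto

lemma notv: "e \<in> EG \<Longrightarrow> e \<notin> IG v \<Longrightarrow> v \<notin> eG e"
  unfolding inc_edges_def by auto

lemma IB_mem: "f \<in> IB b \<longleftrightarrow> f \<in> EB \<and> b \<in> eB f" unfolding inc_edges_def by auto
lemma IG_mem: "e \<in> IG x \<longleftrightarrow> e \<in> EG \<and> x \<in> eG e" unfolding inc_edges_def by auto

lemma mgH_aux: "h \<in> EH \<Longrightarrow> eH h \<subseteq> VH \<and> card (eH h) = 2"
proof -
  assume "h \<in> EH"
  then consider (l) b e where "h = Inl (b, e)" "b \<in> VB" "e \<in> EG" "e \<notin> IG v"
    | (r) f where "h = Inr f" "f \<in> EB" unfolding EH_def by auto
  thus "eH h \<subseteq> VH \<and> card (eH h) = 2"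
  proof cases
    case l
    have "eG e \<subseteq> VG" "card (eG e) = 2" using mgG l unfolding multigraph_def by auto
    moreover have "v \<notin> eG e" using notv l by auto
    moreover have "card (Pair b ` eG e) = card (eG e)" by (simp add: card_image inj_on_def)
    ultimately show ?thesis using l unfolding VH_def by auto
  next
    case r
    obtain b1 b2 where bb: "eB f = {b1, b2}" "b1 \<noteq> b2" "b1 \<in> VB" "b2 \<in> VB" using mg_ends[OF mgB r(2)] by blast
    have "f \<in> IB b1" "f \<in> IB b2" using bb r unfolding inc_edges_def by auto
    hence "port b1 f \<in> VH" "port b2 f \<in> VH" using port_VH bb by auto
    moreover have "port b1 f \<noteq> port b2 f" using bb unfolding port_def by auto
    ultimately show ?thesis using r bb by auto
  qed
qed

lemma mgH: "multigraph VH EH eH"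
proof -
  have "finite VH" using mgG mgB unfolding VH_def multigraph_def by simp
  moreover have "finite EH" using mgG mgB unfolding EH_def multigraph_def by simp
  ultimately show ?thesis unfolding multigraph_def using mgH_aux by blast
qed

lemma incH_Inl: "Inl (b', e) \<in> inc_edges EH eH (b, x) \<longleftrightarrow> b' = b \<and> b \<in> VB \<and> e \<in> EG \<and> e \<notin> IG v \<and> x \<in> eG e"
  unfolding inc_edges_def EH_def by auto

lemma incH_Inr: "Inr f \<in> inc_edges EH eH (b, x) \<longleftrightarrow> f \<in> EB \<and> b \<in> eB f \<and> x = oth eG v (\<sigma> b f)"
  unfolding inc_edges_def EH_def by (auto simp: port_def)

definition \<phi> :: "nat \<Rightarrow> nat \<times> nat + nat \<Rightarrow> nat" where
  "\<phi> b h = (case h of Inl (b', e) \<Rightarrow> e | Inr f \<Rightarrow> \<sigma> b f)"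

lemma incH_bij:
  assumes b: "b \<in> VB" and x: "x \<in> VG" "x \<noteq> v"
  shows "bij_betw (\<phi> b) (inc_edges EH eH (b, x)) (IG x)"
  unfolding bij_betw_def
proof (intro conjI)
  show "inj_on (\<phi> b) (inc_edges EH eH (b, x))"
  proof (rule inj_onI)
    fix h1 h2 assume h: "h1 \<in> inc_edges EH eH (b, x)" "h2 \<in> inc_edges EH eH (b, x)" "\<phi> b h1 = \<phi> b h2"
    show "h1 = h2"
    proof (cases h1)
      case (Inl p1)
      then obtain b1 e1 where 1: "h1 = Inl (b1, e1)" by (cases p1) auto
      show ?thesis
      proof (cases h2)
        case (Inl p2)
        then obtain b2 e2 where 2: "h2 = Inl (b2, e2)" by (cases p2) auto
        show ?thesis using h 1 2 incH_Inl unfolding \<phi>_def by auto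
      next
        case (Inr f2)
        have "f2 \<in> IB b" using h Inr incH_Inr IB_mem by auto
        hence "\<sigma> b f2 \<in> IG v" using \<sigma>_in b by auto
        thus ?thesis using h 1 Inr incH_Inl unfolding \<phi>_def by auto
      qed
    next
      case (Inr f1)
      have f1: "f1 \<in> IB b" using h Inr incH_Inr IB_mem by auto
      hence s1: "\<sigma> b f1 \<in> IG v" using \<sigma>_in b by auto
      show ?thesis
      proof (cases h2)
        case (Inl p2)
        then obtain b2 e2 where 2: "h2 = Inl (b2, e2)" by (cases p2) auto
        thus ?thesis using h s1 Inr incH_Inl unfolding \<phi>_def by auto
      next
        case (Inr f2)
        have "f2 \<in> IB b" using h Inr incH_Inr IB_mem by auto
        moreover have "\<sigma> b f1 = \<sigma> b f2" using h(3) \<open>h1 = Inr f1\<close> Inr unfolding \<phi>_def by simp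
        ultimately have "f1 = f2" using f1 \<sigma>bij[OF b] unfolding bij_betw_def by (meson inj_onD)
        thus ?thesis using Inr \<open>h1 = Inr f1\<close> by simp
      qed
    qed
  qed
next
  show "\<phi> b ` inc_edges EH eH (b, x) = IG x"
  proof
    show "\<phi> b ` inc_edges EH eH (b, x) \<subseteq> IG x"
    proof
      fix e assume "e \<in> \<phi> b ` inc_edges EH eH (b, x)"
      then obtain h where h: "h \<in> inc_edges EH eH (b, x)" "e = \<phi> b h" by auto
      show "e \<in> IG x"
      proof (cases h)
        case (Inl p)
        then obtain b1 e1 where 1: "h = Inl (b1, e1)" by (cases p) auto
        thus ?thesis using h incH_Inl IG_mem unfolding \<phi>_def by auto
      next
        case (Inr f)
        have f: "f \<in> IB b" "x = oth eG v (\<sigma> b f)" using h Inr incH_Inr IB_mem by auto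
        thus ?thesis using \<sigma>_ends[OF b f(1)] h Inr IG_mem unfolding \<phi>_def by auto
      qed
    qed
  next
    show "IG x \<subseteq> \<phi> b ` inc_edges EH eH (b, x)"
    proof
      fix e assume e: "e \<in> IG x"
      show "e \<in> \<phi> b ` inc_edges EH eH (b, x)"
      proof (cases "e \<in> IG v")
        case True
        define f where "f = inv_into (IB b) (\<sigma> b) e"
        have f: "f \<in> IB b" "\<sigma> b f = e" using \<sigma>bij[OF b] True unfolding f_def
          by (auto simp: bij_betw_def inv_into_into f_inv_into_f)
        have "eG e = {v, oth eG v e}" using \<sigma>_ends[OF b f(1)] f by auto
        hence "x = oth eG v (\<sigma> b f)" using e x f IG_mem by auto
        hence "Inr f \<in> inc_edges EH eH (b, x)" using f incH_Inr IB_mem by auto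
        thus ?thesis using f unfolding \<phi>_def by force
      next
        case False
        hence "Inl (b, e) \<in> inc_edges EH eH (b, x)" using e b incH_Inl IG_mem by auto
        thus ?thesis unfolding \<phi>_def by force
      qed
    qed
  qed
qed

lemma cubH: "cubic VH EH eH"
  unfolding cubic_def
proof (intro conjI ballI mgH)
  fix p assume "p \<in> VH"
  then obtain b x where p: "p = (b, x)" "b \<in> VB" "x \<in> VG" "x \<noteq> v" unfolding VH_def by auto
  have "card (inc_edges EH eH (b, x)) = card (IG x)" using bij_betw_same_card[OF incH_bij] p by blast
  thus "card (inc_edges EH eH p) = 3" using p cubic_inc3[OF cG] by auto
qed

end

lemma reach_port:
  assumes cub: "cubic V E ends" and kc: "k_connected 3 V E ends" and v: "v \<in> V"
    and Y: "Y \<subseteq> V - {v}" "card Y \<le> 2" and z: "z \<in> V - {v} - Y"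
  shows "\<exists>e\<in>inc_edges E ends v. oth ends v e \<notin> Y \<and>
           (z, oth ends v e) \<in> (adj_in (V - {v} - Y) E ends)\<^sup>*"
proof -
  have mg: "multigraph V E ends" using cub cubic_mg by blast
  have "connected_induced (V - Y) E ends" using Y by (intro kconn_conn[OF kc]) auto
  hence zv: "(z, v) \<in> (adj_in (V - Y) E ends)\<^sup>*" using z v Y unfolding connected_induced_def by auto
  have "z \<noteq> v \<longrightarrow> (\<exists>e\<in>inc_edges E ends v. oth ends v e \<notin> Y \<and>
           (z, oth ends v e) \<in> (adj_in (V - {v} - Y) E ends)\<^sup>*)"
    using zv
  proof (induction rule: converse_rtrancl_induct)
    case base thus ?case by simp
  next
    case (step z y)
    show ?case
    proof
      assume zv: "z \<noteq> v"
      from step(1) obtain g where g: "g \<in> E" "ends g = {z, y}" "z \<in> V - Y" "y \<in> V - Y"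
        unfolding adj_in_def by auto
      show "\<exists>e\<in>inc_edges E ends v. oth ends v e \<notin> Y \<and>
           (z, oth ends v e) \<in> (adj_in (V - {v} - Y) E ends)\<^sup>*"
      proof (cases "y = v")
        case True
        have "ends g = {v, z}" using g True by auto
        hence "oth ends v g = z" using oth_eq zv by metis
        moreover have "g \<in> inc_edges E ends v" using g True unfolding inc_edges_def by auto
        ultimately show ?thesis using g by auto
      next
        case False
        then obtain e where e: "e\<in>inc_edges E ends v" "oth ends v e \<notin> Y"
          "(y, oth ends v e) \<in> (adj_in (V - {v} - Y) E ends)\<^sup>*" using step(3) by blast
        have "(z, y) \<in> adj_in (V - {v} - Y) E ends" using g zv False unfolding adj_in_def by auto
        thus ?thesis using e by (meson converse_rtrancl_into_rtrancl)
      qed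
    qed
  qed
  thus ?thesis using z by auto
qed

context repl begin

lemma card_VH: "card VH > 3"
proof -
  have fB: "finite VB" "card VB > 3" using kB mgB unfolding k_connected_def multigraph_def by auto
  have fG: "finite VG" "card VG > 3" using kG mgG unfolding k_connected_def multigraph_def by auto
  have "card (VG - {v}) = card VG - 1" using vV fG by simp
  hence "card (VG - {v}) \<ge> 1" using fG by linarith
  hence "card VB * card (VG - {v}) \<ge> card VB * 1" by (intro mult_le_mono2)
  thus ?thesis unfolding VH_def card_cartesian_product using fB by linarith
qed

lemma gadget_lift:
  assumes b: "b \<in> VB" and Y: "\<And>y. (b, y) \<in> X \<Longrightarrow> y \<in> Y"
    and p: "(x, x') \<in> (adj_in (VG - {v} - Y) EG eG)\<^sup>*"
  shows "((b, x), (b, x')) \<in> (adj_in (VH - X) EH eH)\<^sup>*"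
proof (rule rtr_map[OF p])
  fix y y' assume "(y, y') \<in> adj_in (VG - {v} - Y) EG eG"
  then obtain e where e: "e \<in> EG" "eG e = {y, y'}" "y \<in> VG - {v} - Y" "y' \<in> VG - {v} - Y"
    unfolding adj_in_def by auto
  have "e \<notin> IG v" using e unfolding inc_edges_def by auto
  hence "Inl (b, e) \<in> EH" using e b unfolding EH_def by auto
  moreover have "eH (Inl (b, e)) = {(b, y), (b, y')}" using e by auto
  moreover have "(b, y) \<in> VH - X" "(b, y') \<in> VH - X" using e b Y unfolding VH_def by auto
  ultimately show "((b, y), (b, y')) \<in> adj_in (VH - X) EH eH" unfolding adj_in_def by blast
qed

lemma port_edge:
  assumes f: "f \<in> EB" "eB f = {b1, b2}" "b1 \<in> VB" "b2 \<in> VB"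
    and X: "port b1 f \<notin> X" "port b2 f \<notin> X"
  shows "(port b1 f, port b2 f) \<in> adj_in (VH - X) EH eH"
proof -
  have "f \<in> IB b1" "f \<in> IB b2" using f IB_mem by auto
  hence "port b1 f \<in> VH" "port b2 f \<in> VH" using port_VH f by auto
  moreover have "Inr f \<in> EH" using f unfolding EH_def by auto
  moreover have "eH (Inr f) = {port b1 f, port b2 f}" using f by auto
  ultimately show ?thesis using X unfolding adj_in_def by blast
qed

lemma oth_B: "b \<in> VB \<Longrightarrow> f \<in> IB b \<Longrightarrow> eB f = {b, oth eB b f} \<and> oth eB b f \<noteq> b \<and> oth eB b f \<in> VB \<and> f \<in> EB"
  using mg_inc[OF mgB] by blast


lemma inv_\<sigma>:
  assumes b: "b \<in> VB" and e: "e \<in> IG v"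
  shows "inv_into (IB b) (\<sigma> b) e \<in> IB b" "\<sigma> b (inv_into (IB b) (\<sigma> b) e) = e"
  using \<sigma>bij[OF b] e by (auto simp: bij_betw_def inv_into_into f_inv_into_f)

lemma U_conn:
  assumes X: "X \<subseteq> VH" "card X < 3"
    and b: "b1 \<in> VB - fst ` X" "b2 \<in> VB - fst ` X" and x: "x1 \<in> VG - {v}" "x2 \<in> VG - {v}"
  shows "((b1, x1), (b2, x2)) \<in> (adj_in (VH - X) EH eH)\<^sup>*"
proof -
  let ?R = "adj_in (VH - X) EH eH"
  have gc: "connected_induced (VG - {v}) EG eG" using vV by (intro kconn_conn[OF kG]) auto
  have intact: "((b, y), (b, y')) \<in> ?R\<^sup>*" if "b \<in> VB - fst ` X" "y \<in> VG - {v}" "y' \<in> VG - {v}" for b y y'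
  proof (rule gadget_lift[of b X "{}"])
    show "b \<in> VB" using that by auto
    show "\<And>y. (b, y) \<in> X \<Longrightarrow> y \<in> {}" using that by force
    show "(y, y') \<in> (adj_in (VG - {v} - {}) EG eG)\<^sup>*" using gc that unfolding connected_induced_def by auto
  qed
  have "card (fst ` X) < 3" using X card_image_le[of X fst] finite_subset[OF X(1)] mgH
    unfolding multigraph_def by fastforce
  moreover have "fst ` X \<subseteq> VB" using X unfolding VH_def by auto
  ultimately have bc: "connected_induced (VB - fst ` X) EB eB" by (intro kconn_conn[OF kB])
  hence "(b1, b2) \<in> (adj_in (VB - fst ` X) EB eB)\<^sup>*" using b unfolding connected_induced_def by auto
  hence "\<forall>x2 \<in> VG - {v}. ((b1, x1), (b2, x2)) \<in> ?R\<^sup>*"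
  proof (induction rule: rtrancl_induct)
    case base thus ?case using intact b x by auto
  next
    case (step b b2)
    from step(2) obtain f where f: "f \<in> EB" "eB f = {b, b2}" "b \<in> VB - fst ` X" "b2 \<in> VB - fst ` X"
      unfolding adj_in_def by auto
    have fi: "f \<in> IB b" "f \<in> IB b2" using f IB_mem by auto
    have p1: "port b f \<in> VH" "port b2 f \<in> VH" using port_VH fi f by auto
    have nX: "port b f \<notin> X" "port b2 f \<notin> X" using f unfolding port_def by force+
    have e: "(port b f, port b2 f) \<in> ?R" using port_edge[OF f(1,2) _ _ nX] f by auto
    show ?case
    proof
      fix x2 assume x2: "x2 \<in> VG - {v}"
      have 1: "((b1, x1), port b f) \<in> ?R\<^sup>*" using step(3) p1 unfolding port_def VH_def by auto
      have 2: "(port b2 f, (b2, x2)) \<in> ?R\<^sup>*" using intact[OF f(4) _ x2] p1 unfolding port_def VH_def by auto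
      show "((b1, x1), (b2, x2)) \<in> ?R\<^sup>*" using 1 e 2 by (meson rtrancl_into_rtrancl rtrancl_trans)
    qed
  qed
  thus ?thesis using x by auto
qed


lemma reach_U:
  assumes X: "X \<subseteq> VH" "card X < 3" and p: "(b, x) \<in> VH - X"
  shows "\<exists>b' x'. b' \<in> VB - fst ` X \<and> x' \<in> VG - {v} \<and> ((b, x), (b', x')) \<in> (adj_in (VH - X) EH eH)\<^sup>*"
proof -
  let ?R = "adj_in (VH - X) EH eH"
  have fX: "finite X" using X finite_subset mgH unfolding multigraph_def by blast
  have bx: "b \<in> VB" "x \<in> VG" "x \<noteq> v" using p unfolding VH_def by auto
  show ?thesis
  proof (cases "b \<in> fst ` X")
    case False thus ?thesis using bx by blast
  next
    case True
    then obtain y0 where y0: "(b, y0) \<in> X" by force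
    have y0V: "y0 \<in> VG" "y0 \<noteq> v" using y0 X unfolding VH_def by auto
    show ?thesis
    proof (cases "\<forall>q\<in>X. fst q = b")
      case True
      define Y where "Y = {y. (b, y) \<in> X}"
      have YX: "Y \<subseteq> snd ` X" unfolding Y_def by force
      have "card Y \<le> 2" using card_mono[OF _ YX] card_image_le[OF fX, of snd] fX X(2) by fastforce
      moreover have "Y \<subseteq> VG - {v}" using X unfolding Y_def VH_def by auto
      moreover have "x \<in> VG - {v} - Y" using p bx unfolding Y_def by auto
      ultimately obtain e where e: "e \<in> IG v" "oth eG v e \<notin> Y"
        "(x, oth eG v e) \<in> (adj_in (VG - {v} - Y) EG eG)\<^sup>*" using reach_port[OF cG kG vV] by blast
      have 1: "((b, x), (b, oth eG v e)) \<in> ?R\<^sup>*" by (rule gadget_lift[OF bx(1) _ e(3)]) (auto simp: Y_def)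
      define f where "f = inv_into (IB b) (\<sigma> b) e"
      have f: "f \<in> IB b" "\<sigma> b f = e" using inv_\<sigma>[OF bx(1) e(1)] unfolding f_def by auto
      define b'' where "b'' = oth eB b f"
      have b'': "eB f = {b, b''}" "b'' \<noteq> b" "b'' \<in> VB" "f \<in> EB" using oth_B[OF bx(1) f(1)] unfolding b''_def by auto
      have nb: "b'' \<notin> fst ` X" using True b'' by auto
      have pb: "port b f = (b, oth eG v e)" unfolding port_def f by simp
      have nX: "port b f \<notin> X" "port b'' f \<notin> X" using e(2) nb unfolding pb Y_def by (auto simp: port_def image_iff)
      have 2: "(port b f, port b'' f) \<in> ?R" using port_edge[OF b''(4,1) bx(1) b''(3) nX] .
      have "port b'' f \<in> VH" using port_VH b'' IB_mem by auto
      hence "snd (port b'' f) \<in> VG - {v}" "fst (port b'' f) = b''" unfolding VH_def port_def by auto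
      moreover have "((b, x), port b'' f) \<in> ?R\<^sup>*" using 1 2 pb by simp
      ultimately show ?thesis using nb b'' by (metis DiffI prod.collapse)
    next
      case False
      then obtain q where q: "q \<in> X" "fst q \<noteq> b" by blast
      have qne: "q \<noteq> (b, y0)" using q by auto
      have "{q, (b, y0)} \<subseteq> X" using q y0 by auto
      moreover have "card {q, (b, y0)} = 2" using qne by simp
      ultimately have "{q, (b, y0)} = X" using card_seteq[OF fX] X(2) by simp
      hence Xeq: "X = {q, (b, y0)}" by simp
      define bq where "bq = fst q"
      have XB: "fst ` X = {bq, b}" unfolding Xeq bq_def by simp
      define S1 where "S1 = {f \<in> IB b. bq \<in> eB f}"
      define S2 where "S2 = {f \<in> IB b. oth eG v (\<sigma> b f) = y0}"
      have finIB: "finite (IB b)" using mg_fin_inc[OF mgB] .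
      have S1: "card S1 \<le> 1"
      proof -
        have "f1 = f2" if "f1 \<in> S1" "f2 \<in> S1" for f1 f2
        proof (rule ccontr)
          assume ne: "f1 \<noteq> f2"
          have "eB f1 = {b, oth eB b f1}" "oth eB b f1 \<noteq> b" "f1 \<in> EB"
               "eB f2 = {b, oth eB b f2}" "oth eB b f2 \<noteq> b" "f2 \<in> EB"
            using oth_B[OF bx(1)] that unfolding S1_def by auto
          moreover have "bq \<noteq> b" using q bq_def by auto
          ultimately have "eB f1 = eB f2" using that unfolding S1_def by auto
          thus False using simple3[OF cB kB] ne \<open>f1 \<in> EB\<close> \<open>f2 \<in> EB\<close> by blast
        qed
        thus ?thesis using finIB unfolding S1_def by (auto simp: card_le_Suc0_iff_eq)
      qed
      have S2: "card S2 \<le> 1"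
      proof -
        have "f1 = f2" if "f1 \<in> S2" "f2 \<in> S2" for f1 f2
        proof -
          have i: "f1 \<in> IB b" "f2 \<in> IB b" using that unfolding S2_def by auto
          have "eG (\<sigma> b f1) = {v, y0}" "eG (\<sigma> b f2) = {v, y0}" "\<sigma> b f1 \<in> EG" "\<sigma> b f2 \<in> EG"
            using \<sigma>_ends[OF bx(1) i(1)] \<sigma>_ends[OF bx(1) i(2)] that unfolding S2_def by auto
          hence "\<sigma> b f1 = \<sigma> b f2" using simple3[OF cG kG] by metis
          thus ?thesis using i \<sigma>bij[OF bx(1)] unfolding bij_betw_def by (meson inj_onD)
        qed
        thus ?thesis using finIB unfolding S2_def by (auto simp: card_le_Suc0_iff_eq)
      qed
      have "\<not> IB b \<subseteq> S1 \<union> S2"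
      proof
        assume "IB b \<subseteq> S1 \<union> S2"
        hence "card (IB b) \<le> card (S1 \<union> S2)" using finIB S1_def S2_def by (intro card_mono) auto
        also have "\<dots> \<le> card S1 + card S2" by (rule card_Un_le)
        finally show False using S1 S2 cubic_inc3[OF cB bx(1)] by linarith
      qed
      then obtain f where f: "f \<in> IB b" "bq \<notin> eB f" "oth eG v (\<sigma> b f) \<noteq> y0"
        unfolding S1_def S2_def by blast
      define y' where "y' = oth eG v (\<sigma> b f)"
      have y': "y' \<in> VG" "y' \<noteq> v" using \<sigma>_ends[OF bx(1) f(1)] unfolding y'_def by auto
      have gc: "connected_induced (VG - {v, y0}) EG eG" using vV y0V
        by (intro kconn_conn[OF kG]) (auto simp: card_insert_if)
      have "(x, y') \<in> (adj_in (VG - {v} - {y0}) EG eG)\<^sup>*"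
      proof -
        have "x \<in> VG - {v, y0}" "y' \<in> VG - {v, y0}" using bx p y0 y' f(3) unfolding y'_def by auto
        moreover have "VG - {v, y0} = VG - {v} - {y0}" by auto
        ultimately show ?thesis using gc unfolding connected_induced_def by metis
      qed
      hence 1: "((b, x), (b, y')) \<in> ?R\<^sup>*"
        by (rule gadget_lift[OF bx(1), rotated]) (use Xeq q in auto)
      define b'' where "b'' = oth eB b f"
      have b'': "eB f = {b, b''}" "b'' \<noteq> b" "b'' \<in> VB" "f \<in> EB" using oth_B[OF bx(1) f(1)] unfolding b''_def by auto
      have nb: "b'' \<notin> fst ` X" using XB b'' f(2) by auto
      have pb: "port b f = (b, y')" unfolding port_def y'_def by simp
      have nX: "port b f \<notin> X" "port b'' f \<notin> X" using nb f(3) q unfolding pb Xeq bq_def y'_def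
        by (auto simp: port_def image_iff)
      have 2: "(port b f, port b'' f) \<in> ?R" using port_edge[OF b''(4,1) bx(1) b''(3) nX] .
      have "port b'' f \<in> VH" using port_VH b'' IB_mem by auto
      hence "snd (port b'' f) \<in> VG - {v}" "fst (port b'' f) = b''" unfolding VH_def port_def by auto
      moreover have "((b, x), port b'' f) \<in> ?R\<^sup>*" using 1 2 pb by simp
      ultimately show ?thesis using nb b'' by (metis DiffI prod.collapse)
    qed
  qed
qed

lemma kH: "k_connected 3 VH EH eH"
  unfolding k_connected_def
proof (intro conjI mgH card_VH allI impI)
  fix X assume X: "X \<subseteq> VH" "card X < 3"
  let ?R = "adj_in (VH - X) EH eH"
  have "card (fst ` X) < 3" using X card_image_le[of X fst] finite_subset mgH
    unfolding multigraph_def by fastforce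
  moreover have "card VB > 3" "finite VB" using kB mgB unfolding k_connected_def multigraph_def by auto
  moreover have "finite (fst ` X)" using X finite_subset mgH unfolding multigraph_def by blast
  ultimately have "\<not> VB \<subseteq> fst ` X" using card_mono[of "fst ` X" VB] by linarith
  then obtain b0 where b0: "b0 \<in> VB - fst ` X" by blast
  have "card VG > 3" using kG unfolding k_connected_def by auto
  moreover have "card (VG - {v}) = card VG - 1" using vV by simp
  ultimately have "card (VG - {v}) \<noteq> 0" by linarith
  hence "VG - {v} \<noteq> {}" by force
  then obtain x0 where x0: "x0 \<in> VG - {v}" by blast
  show "connected_induced (VH - X) EH eH"
    unfolding connected_induced_def
  proof (intro conjI ballI)
    have "(b0, x0) \<in> VH - X" using b0 x0 unfolding VH_def by force
    thus "VH - X \<noteq> {}" by blast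
  next
    fix p q assume pq: "p \<in> VH - X" "q \<in> VH - X"
    obtain b1 x1 where 1: "p = (b1, x1)" by force
    obtain b2 x2 where 2: "q = (b2, x2)" by force
    obtain b1' x1' where a: "b1' \<in> VB - fst ` X" "x1' \<in> VG - {v}" "(p, (b1', x1')) \<in> ?R\<^sup>*"
      using reach_U[of X b1 x1] X pq 1 by blast
    obtain b2' x2' where c: "b2' \<in> VB - fst ` X" "x2' \<in> VG - {v}" "(q, (b2', x2')) \<in> ?R\<^sup>*"
      using reach_U[of X b2 x2] X pq 2 by blast
    have "((b1', x1'), (b2', x2')) \<in> ?R\<^sup>*" using U_conn X a c by blast
    moreover have "((b2', x2'), q) \<in> ?R\<^sup>*" by (rule adj_rtr_sym[OF c(3)])
    ultimately show "(p, q) \<in> ?R\<^sup>*" using a(3) by (meson rtrancl_trans)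
  qed
qed

end

lemma free_color:
  assumes "finite (A :: nat set)" "card A < 5"
  shows "\<exists>g\<in>{1..5}. g \<notin> A"
proof (rule ccontr)
  assume "\<not> ?thesis"
  hence "{1..5} \<subseteq> A" by auto
  hence "card {1..(5::nat)} \<le> card A" using assms(1) by (rule card_mono[rotated])
  thus False using assms(2) by simp
qed

context repl begin

lemma cH: 
  assumes c: "proper_edge_coloring 5 EH eH c"
  shows "\<And>h. h \<in> EH \<Longrightarrow> c h \<in> {1..5}"
    "\<And>h h' p. h \<in> EH \<Longrightarrow> h' \<in> EH \<Longrightarrow> h \<noteq> h' \<Longrightarrow> p \<in> eH h \<Longrightarrow> p \<in> eH h' \<Longrightarrow> c h \<noteq> c h'"
  using c unfolding proper_edge_coloring_def by blast+

lemma color_transfer: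
  assumes c: "proper_edge_coloring 5 EH eH c" and b: "b \<in> VB"
  shows "\<exists>cG. proper_edge_coloring 5 EG eG cG \<and>
    card (abnormal_edges EG eG cG) \<le> card {e. Inl (b, e) \<in> abnormal_edges EH eH c} + 7"
proof -
  have "card (IG v) = 3" using cubic_inc3[OF cG vV] .
  then obtain e1 e2 e3 where E3: "IG v = {e1, e2, e3}" "e1 \<noteq> e2" "e2 \<noteq> e3" "e1 \<noteq> e3"
    unfolding card_3_iff by blast
  define x1 where "x1 = oth eG v e1"
  define x2 where "x2 = oth eG v e2"
  define x3 where "x3 = oth eG v e3"
  have ei: "e1 \<in> IG v" "e2 \<in> IG v" "e3 \<in> IG v" using E3 by auto
  have x1: "eG e1 = {v, x1}" "x1 \<noteq> v" "x1 \<in> VG" "e1 \<in> EG" using mg_inc[OF mgG ei(1)] unfolding x1_def by auto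
  have x2: "eG e2 = {v, x2}" "x2 \<noteq> v" "x2 \<in> VG" "e2 \<in> EG" using mg_inc[OF mgG ei(2)] unfolding x2_def by auto
  have x3: "eG e3 = {v, x3}" "x3 \<noteq> v" "x3 \<in> VG" "e3 \<in> EG" using mg_inc[OF mgG ei(3)] unfolding x3_def by auto
  define f1 where "f1 = inv_into (IB b) (\<sigma> b) e1"
  have f1: "f1 \<in> IB b" "\<sigma> b f1 = e1" using inv_\<sigma>[OF b ei(1)] unfolding f1_def by auto
  have f1H: "Inr f1 \<in> EH" "(b, x1) \<in> eH (Inr f1)"
    using f1 IB_mem unfolding EH_def x1_def by (auto simp: image_iff port_def)
  define d1 where "d1 = c (Inr f1)"
  have d1: "d1 \<in> {1..5}" using cH(1)[OF c f1H(1)] unfolding d1_def .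
  define F2 where "F2 = (\<lambda>e. c (Inl (b, e))) ` (IG x2 - IG v)"
  define F3 where "F3 = (\<lambda>e. c (Inl (b, e))) ` (IG x3 - IG v)"
  have cardF: "card (IG x - IG v) \<le> 2" "finite (IG x - IG v)" if "x \<in> VG" "e \<in> IG v" "e \<in> IG x" for x e
  proof -
    have "IG x - IG v \<subseteq> IG x - {e}" using that by auto
    moreover have "card (IG x - {e}) = 2" using cubic_inc3[OF cG that(1)] that(3) mg_fin_inc[OF mgG] by simp
    ultimately show "card (IG x - IG v) \<le> 2" "finite (IG x - IG v)" using mg_fin_inc[OF mgG]
      by (metis card_mono finite_Diff) (simp add: mg_fin_inc[OF mgG])
  qed
  have e2x2: "e2 \<in> IG x2" using x2 IG_mem by auto
  have e3x3: "e3 \<in> IG x3" using x3 IG_mem by auto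
  have F2: "finite F2" "card F2 \<le> 2" unfolding F2_def using cardF[OF x2(3) ei(2) e2x2]
    by (auto intro: order_trans[OF card_image_le])
  have F3: "finite F3" "card F3 \<le> 2" unfolding F3_def using cardF[OF x3(3) ei(3) e3x3]
    by (auto intro: order_trans[OF card_image_le])
  obtain g2 where g2: "g2 \<in> {1..5}" "g2 \<notin> F2" "g2 \<noteq> d1"
  proof -
    have "card (insert d1 F2) < 5" using F2 card_insert_le_m1[of 5 F2 d1] by (simp add: card_insert_if)
    thus ?thesis using free_color[of "insert d1 F2"] F2 that by auto
  qed
  obtain g3 where g3: "g3 \<in> {1..5}" "g3 \<notin> F3" "g3 \<noteq> d1" "g3 \<noteq> g2"
  proof -
    have "card (insert d1 (insert g2 F3)) < 5" using F3 by (simp add: card_insert_if)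
    thus ?thesis using free_color[of "insert d1 (insert g2 F3)"] F3 that by auto
  qed
  define cG where "cG e = (if e = e1 then d1 else if e = e2 then g2 else if e = e3 then g3 else c (Inl (b, e)))" for e
  have cGv: "cG e1 = d1" "cG e2 = g2" "cG e3 = g3" using E3 unfolding cG_def by auto
  have cG_int: "cG e = c (Inl (b, e))" if "e \<notin> IG v" for e using that E3 unfolding cG_def by auto
  have Inl_EH: "Inl (b, e) \<in> EH" if "e \<in> EG" "e \<notin> IG v" for e using that b unfolding EH_def by auto
  have key: "cG e \<noteq> cG e'" if "e \<in> IG v" "e' \<in> EG" "e' \<notin> IG v" "w \<in> eG e" "w \<in> eG e'" for e e' w
  proof -
    have wv: "w \<noteq> v" using that notv by auto
    have ce': "cG e' = c (Inl (b, e'))" using cG_int that by auto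
    have e'H: "Inl (b, e') \<in> EH" using Inl_EH that by auto
    have "e \<in> {e1, e2, e3}" using that(1) E3(1) by simp
    then consider "e = e1" | "e = e2" | "e = e3" by fast
    thus ?thesis
    proof cases
      case 1
      hence "w = x1" using x1 that wv by auto
      hence "(b, w) \<in> eH (Inr f1)" "(b, w) \<in> eH (Inl (b, e'))" using f1H that by auto
      have "c (Inr f1) \<noteq> c (Inl (b, e'))" by (rule cH(2)[OF c f1H(1) e'H _ \<open>(b, w) \<in> eH (Inr f1)\<close> \<open>(b, w) \<in> eH (Inl (b, e'))\<close>]) simp
      thus ?thesis using ce' 1 cGv unfolding d1_def by simp
    next
      case 2
      hence "w = x2" using x2 that wv by auto
      hence "e' \<in> IG x2 - IG v" using that IG_mem by auto
      hence "c (Inl (b, e')) \<in> F2" unfolding F2_def by (rule imageI)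
      thus ?thesis using g2 ce' 2 cGv by auto
    next
      case 3
      hence "w = x3" using x3 that wv by auto
      hence "e' \<in> IG x3 - IG v" using that IG_mem by auto
      hence "c (Inl (b, e')) \<in> F3" unfolding F3_def by (rule imageI)
      thus ?thesis using g3 ce' 3 cGv by auto
    qed
  qed
  have proper: "proper_edge_coloring 5 EG eG cG"
    unfolding proper_edge_coloring_def
  proof (intro conjI ballI impI)
    fix e assume e: "e \<in> EG"
    show "cG e \<in> {1..5}"
    proof (cases "e \<in> IG v")
      case True
      hence "e \<in> {e1, e2, e3}" using E3(1) by simp
      thus ?thesis using d1 g2(1) g3(1) cGv by auto
    next
      case False thus ?thesis using cG_int cH(1)[OF c Inl_EH[OF e False]] by auto
    qed
  next
    fix e e' assume e: "e \<in> EG" "e' \<in> EG" and ne: "e \<noteq> e' \<and> eG e \<inter> eG e' \<noteq> {}"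
    then obtain w where w: "w \<in> eG e" "w \<in> eG e'" by blast
    show "cG e \<noteq> cG e'"
    proof (cases "e \<in> IG v")
      case True
      show ?thesis
      proof (cases "e' \<in> IG v")
        case True
        hence "e' \<in> {e1, e2, e3}" using E3(1) by simp
        moreover have "e \<in> {e1, e2, e3}" using \<open>e \<in> IG v\<close> E3(1) by simp
        moreover have "e \<noteq> e'" using ne by simp
        ultimately show ?thesis using g2(3) g3(3,4) cGv by auto
      next
        case False show ?thesis using key[OF True e(2) False w] .
      qed
    next
      case False
      show ?thesis
      proof (cases "e' \<in> IG v")
        case True thus ?thesis using key[OF True e(1) False w(2) w(1)] by simp
      next
        case F': False
        have neq: "Inl (b, e) \<noteq> Inl (b, e')" using ne by simp
        have p1: "(b, w) \<in> eH (Inl (b, e))" using w(1) by force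
        have p2: "(b, w) \<in> eH (Inl (b, e'))" using w(2) by force
        have "c (Inl (b, e)) \<noteq> c (Inl (b, e'))"
          by (rule cH(2)[OF c Inl_EH[OF e(1) False] Inl_EH[OF e(2) F'] neq p1 p2])
        thus ?thesis using cG_int[OF False] cG_int[OF F'] by simp
      qed
    qed
  qed
  have cs_eq: "color_set EG eG cG w = color_set EH eH c (b, w)"
    if w: "w \<in> VG" "w \<noteq> v" "w \<noteq> x2" "w \<noteq> x3" for w
  proof -
    have bij: "bij_betw (\<phi> b) (inc_edges EH eH (b, w)) (IG w)" using incH_bij[OF b w(1,2)] .
    have "color_set EG eG cG w = cG ` \<phi> b ` inc_edges EH eH (b, w)"
      unfolding color_set_def using bij unfolding bij_betw_def by simp
    also have "\<dots> = c ` inc_edges EH eH (b, w)"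
      unfolding image_image
    proof (rule image_cong[OF refl])
      fix h assume h: "h \<in> inc_edges EH eH (b, w)"
      show "cG (\<phi> b h) = c h"
      proof (cases h)
        case (Inl p)
        then obtain b' e where he: "h = Inl (b', e)" by (cases p) auto
        thus ?thesis using h incH_Inl cG_int unfolding \<phi>_def by auto
      next
        case (Inr f)
        have f: "f \<in> IB b" "w = oth eG v (\<sigma> b f)" using h Inr incH_Inr IB_mem by auto
        have "\<sigma> b f \<in> IG v" using \<sigma>_in[OF b f(1)] .
        moreover have "\<sigma> b f \<noteq> e2" using f(2) w unfolding x2_def by auto
        moreover have "\<sigma> b f \<noteq> e3" using f(2) w unfolding x3_def by auto
        ultimately have "\<sigma> b f = e1" using E3 by auto
        hence "f = f1" using f1 f(1) \<sigma>bij[OF b] unfolding bij_betw_def by (metis inj_onD)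
        thus ?thesis using Inr \<open>\<sigma> b f = e1\<close> cGv unfolding \<phi>_def d1_def by simp
      qed
    qed
    finally show ?thesis unfolding color_set_def .
  qed
  define A where "A = {e. Inl (b, e) \<in> abnormal_edges EH eH c}"
  have sub: "abnormal_edges EG eG cG \<subseteq> A \<union> (IG v \<union> (IG x2 - {e2}) \<union> (IG x3 - {e3}))"
  proof
    fix e assume e: "e \<in> abnormal_edges EG eG cG"
    show "e \<in> A \<union> (IG v \<union> (IG x2 - {e2}) \<union> (IG x3 - {e3}))"
    proof (cases "e \<in> IG v \<or> x2 \<in> eG e \<or> x3 \<in> eG e")
      case True
      have eE: "e \<in> EG" using e unfolding abnormal_edges_def by auto
      show ?thesis
      proof (cases "e \<in> IG v")
        case False
        hence "e \<noteq> e2" "e \<noteq> e3" using ei by auto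
        moreover have "e \<in> IG x2 \<or> e \<in> IG x3" using True False eE IG_mem by auto
        ultimately show ?thesis by auto
      qed simp
    next
      case False
      have eE: "e \<in> EG" using e unfolding abnormal_edges_def by auto
      have vn: "v \<notin> eG e" using False eE IG_mem by auto
      have sub: "eG e \<subseteq> VG" using mgG eE unfolding multigraph_def by auto
      have "(\<Union>x\<in>eH (Inl (b, e)). color_set EH eH c x) = (\<Union>w\<in>eG e. color_set EG eG cG w)"
        using cs_eq sub vn False by auto
      hence "Inl (b, e) \<in> abnormal_edges EH eH c"
        using e Inl_EH[OF eE] False unfolding abnormal_edges_def poor_edge_def rich_edge_def by auto
      thus ?thesis unfolding A_def by auto
    qed
  qed
  have finA: "finite A"
  proof -
    have "A \<subseteq> EG" unfolding A_def abnormal_edges_def EH_def by auto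
    thus ?thesis using mgG finite_subset unfolding multigraph_def by blast
  qed
  have c7: "card (IG v \<union> (IG x2 - {e2}) \<union> (IG x3 - {e3})) \<le> 7"
  proof -
    have "card (IG x2 - {e2}) = 2" using cubic_inc3[OF cG x2(3)] e2x2 mg_fin_inc[OF mgG] by simp
    moreover have "card (IG x3 - {e3}) = 2" using cubic_inc3[OF cG x3(3)] e3x3 mg_fin_inc[OF mgG] by simp
    moreover have "card (IG v \<union> (IG x2 - {e2}) \<union> (IG x3 - {e3})) \<le> card (IG v) + card (IG x2 - {e2}) + card (IG x3 - {e3})"
      by (meson card_Un_le add_le_mono1 order_trans)
    ultimately show ?thesis using cubic_inc3[OF cG vV] by linarith
  qed
  have "card (abnormal_edges EG eG cG) \<le> card (A \<union> (IG v \<union> (IG x2 - {e2}) \<union> (IG x3 - {e3})))"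
    using sub finA mg_fin_inc[OF mgG] by (intro card_mono) auto
  also have "\<dots> \<le> card A + 7" using c7 card_Un_le[of A "IG v \<union> (IG x2 - {e2}) \<union> (IG x3 - {e3})"] by linarith
  finally show ?thesis using proper unfolding A_def by blast
qed

end

lemma step:
  fixes VG EG VB EB :: "nat set" and eG eB :: "nat \<Rightarrow> nat set"
  assumes cG: "cubic VG EG eG" and kG: "k_connected 3 VG EG eG"
    and bad: "\<forall>c. proper_edge_coloring 5 EG eG c \<longrightarrow> 7 < card (abnormal_edges EG eG c)"
    and cB: "cubic VB EB eB" and kB: "k_connected 3 VB EB eB"
  shows "\<exists>(V::nat set) (E::nat set) ends. cubic V E ends \<and> k_connected 3 V E ends \<and>
     card V = card VB * (card VG - 1) \<and>
     (\<forall>c. proper_edge_coloring 5 E ends c \<longrightarrow> card VB \<le> card (abnormal_edges E ends c))"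
proof -
  have "card VG > 3" using kG unfolding k_connected_def by auto
  then obtain v where vV: "v \<in> VG" by fastforce
  define \<sigma> where "\<sigma> b = (SOME h. bij_betw h (inc_edges EB eB b) (inc_edges EG eG v))" for b
  have \<sigma>bij: "bij_betw (\<sigma> b) (inc_edges EB eB b) (inc_edges EG eG v)" if b: "b \<in> VB" for b
  proof -
    have "\<exists>h. bij_betw h (inc_edges EB eB b) (inc_edges EG eG v)"
      using cubic_inc3[OF cB b] cubic_inc3[OF cG vV] mg_fin_inc[OF cubic_mg[OF cB]] mg_fin_inc[OF cubic_mg[OF cG]]
      by (intro finite_same_card_bij) auto
    thus ?thesis unfolding \<sigma>_def by (rule someI_ex)
  qed
  interpret R: repl VG EG eG v VB EB eB \<sigma>
    by unfold_locales (use cG kG vV cB kB \<sigma>bij in auto)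
  let ?\<phi> = "to_nat :: nat \<times> nat \<Rightarrow> nat"
  let ?\<psi> = "to_nat :: nat \<times> nat + nat \<Rightarrow> nat"
  define ends' where "ends' n = ?\<phi> ` R.eH (from_nat n)" for n
  interpret I: iso R.VH R.EH R.eH ?\<phi> ?\<psi> ends'
    by unfold_locales (auto simp: ends'_def)
  have cub: "cubic (?\<phi> ` R.VH) (?\<psi> ` R.EH) ends'" using I.cub R.cubH .
  have kc: "k_connected 3 (?\<phi> ` R.VH) (?\<psi> ` R.EH) ends'" using I.kconn R.kH .
  have card: "card (?\<phi> ` R.VH) = card VB * (card VG - 1)"
    using vV unfolding R.VH_def card_image[OF inj_on_subset[OF inj_to_nat subset_UNIV]]
    by (simp add: card_cartesian_product)
  have col: "card VB \<le> card (abnormal_edges (?\<psi> ` R.EH) ends' c)"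
    if c: "proper_edge_coloring 5 (?\<psi> ` R.EH) ends' c" for c
  proof -
    let ?c = "c \<circ> ?\<psi>"
    have pc: "proper_edge_coloring 5 R.EH R.eH ?c" using I.col c .
    have ne: "{e. Inl (b, e) \<in> abnormal_edges R.EH R.eH ?c} \<noteq> {}" if b: "b \<in> VB" for b
    proof -
      obtain cg where cg: "proper_edge_coloring 5 EG eG cg"
        "card (abnormal_edges EG eG cg) \<le> card {e. Inl (b, e) \<in> abnormal_edges R.EH R.eH ?c} + 7"
        using R.color_transfer[OF pc b] by blast
      have "7 < card (abnormal_edges EG eG cg)" using bad cg(1) by blast
      hence "card {e. Inl (b, e) \<in> abnormal_edges R.EH R.eH ?c} \<noteq> 0" using cg(2) by linarith
      thus ?thesis by force
    qed
    define sel where "sel b = (SOME e. Inl (b, e) \<in> abnormal_edges R.EH R.eH ?c)" for b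
    have sel: "Inl (b, sel b) \<in> abnormal_edges R.EH R.eH ?c" if "b \<in> VB" for b
      using ne[OF that] unfolding sel_def by (metis (mono_tags, lifting) empty_Collect_eq someI_ex)
    have fin: "finite (abnormal_edges R.EH R.eH ?c)"
      using R.mgH unfolding multigraph_def abnormal_edges_def by auto
    have "card VB \<le> card (abnormal_edges R.EH R.eH ?c)"
      by (rule card_inj_on_le[of "\<lambda>b. Inl (b, sel b)"]) (use sel fin in \<open>auto simp: inj_on_def\<close>)
    thus ?thesis using I.card_abn by simp
  qed
  show ?thesis using cub kc card col by blast
qed

lemma exists_big:
  fixes VG EG :: "nat set" and eG :: "nat \<Rightarrow> nat set"
  assumes cG: "cubic VG EG eG" and kG: "k_connected 3 VG EG eG"
    and bad: "\<forall>c. proper_edge_coloring 5 EG eG c \<longrightarrow> 7 < card (abnormal_edges EG eG c)"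
  shows "\<exists>(V::nat set) (E::nat set) ends. cubic V E ends \<and> k_connected 3 V E ends \<and> K \<le> card V"
proof (induction K)
  case 0 thus ?case using cG kG by blast
next
  case (Suc K)
  then obtain V E ends where B: "cubic V E ends" "k_connected 3 (V::nat set) (E::nat set) ends" "K \<le> card V" by blast
  obtain V' E' ends' where H: "cubic V' E' ends'" "k_connected 3 (V'::nat set) (E'::nat set) ends'"
    "card V' = card V * (card VG - 1)" using step[OF cG kG bad B(1,2)] by blast
  have "card VG > 3" "card V > 3" using kG B(2) unfolding k_connected_def by auto
  hence "card V * (card VG - 1) \<ge> card V * 3" by (intro mult_le_mono2) linarith
  hence "Suc K \<le> card V'" using H(3) B(3) \<open>card V > 3\<close> by linarith
  thus ?case using H by blast
qed

theorem mainTheorem3: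
  shows "(\<forall>(V :: nat set) (E :: nat set) ends. cubic V E ends \<and> k_connected 3 V E ends \<longrightarrow>
            (\<exists>c. proper_edge_coloring 5 E ends c \<and> card (abnormal_edges E ends c) \<le> 7))
     \<longleftrightarrow>
     (\<exists>f. sublinear f \<and>
        (\<forall>(V :: nat set) (E :: nat set) ends. cubic V E ends \<and> k_connected 3 V E ends \<longrightarrow>
            (\<exists>c. proper_edge_coloring 5 E ends c \<and> card (abnormal_edges E ends c) \<le> f (card V))))"
proof
  assume a: "\<forall>(V :: nat set) (E :: nat set) ends. cubic V E ends \<and> k_connected 3 V E ends \<longrightarrow>
            (\<exists>c. proper_edge_coloring 5 E ends c \<and> card (abnormal_edges E ends c) \<le> 7)"
  have "sublinear (\<lambda>_. 7)" unfolding sublinear_def using lim_const_over_n[of "7::real"] by simp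
  thus "\<exists>f. sublinear f \<and>
        (\<forall>(V :: nat set) (E :: nat set) ends. cubic V E ends \<and> k_connected 3 V E ends \<longrightarrow>
            (\<exists>c. proper_edge_coloring 5 E ends c \<and> card (abnormal_edges E ends c) \<le> f (card V)))"
    using a by blast
next
  assume "\<exists>f. sublinear f \<and>
        (\<forall>(V :: nat set) (E :: nat set) ends. cubic V E ends \<and> k_connected 3 V E ends \<longrightarrow>
            (\<exists>c. proper_edge_coloring 5 E ends c \<and> card (abnormal_edges E ends c) \<le> f (card V)))"
  then obtain f where sf: "sublinear f" and fb: "\<And>(V :: nat set) (E :: nat set) ends. cubic V E ends \<Longrightarrow> k_connected 3 V E ends \<Longrightarrow>
            (\<exists>c. proper_edge_coloring 5 E ends c \<and> card (abnormal_edges E ends c) \<le> f (card V))" by blast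
  show "\<forall>(V :: nat set) (E :: nat set) ends. cubic V E ends \<and> k_connected 3 V E ends \<longrightarrow>
            (\<exists>c. proper_edge_coloring 5 E ends c \<and> card (abnormal_edges E ends c) \<le> 7)"
  proof (intro allI impI, rule ccontr)
    fix VG EG :: "nat set" and eG :: "nat \<Rightarrow> nat set"
    assume G: "cubic VG EG eG \<and> k_connected 3 VG EG eG"
      and nb: "\<not> (\<exists>c. proper_edge_coloring 5 EG eG c \<and> card (abnormal_edges EG eG c) \<le> 7)"
    have bad: "\<forall>c. proper_edge_coloring 5 EG eG c \<longrightarrow> 7 < card (abnormal_edges EG eG c)"
      using nb by (auto simp: not_le)
    define m where "m = card VG - 1"
    have "card VG > 3" using G unfolding k_connected_def by auto
    hence m: "m \<ge> 3" unfolding m_def by linarith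
    have "(\<lambda>n. real (f n) / real n) \<longlonglongrightarrow> 0" using sf unfolding sublinear_def .
    moreover have "(0::real) < 1 / real m" using m by simp
    ultimately obtain N0 where N0: "\<And>n. n \<ge> N0 \<Longrightarrow> norm (real (f n) / real n - 0) < 1 / real m"
      using LIMSEQ_D by blast
    obtain VB EB eB where B: "cubic VB EB eB" "k_connected 3 (VB::nat set) (EB::nat set) eB" "N0 \<le> card VB"
      using exists_big[OF conjunct1[OF G] conjunct2[OF G] bad] by blast
    obtain V E ends where H: "cubic V E ends" "k_connected 3 (V::nat set) (E::nat set) ends"
      "card V = card VB * m"
      "\<forall>c. proper_edge_coloring 5 E ends c \<longrightarrow> card VB \<le> card (abnormal_edges E ends c)"
      using step[OF conjunct1[OF G] conjunct2[OF G] bad B(1,2)] unfolding m_def by blast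
    obtain c where c: "proper_edge_coloring 5 E ends c" "card (abnormal_edges E ends c) \<le> f (card V)"
      using fb[OF H(1,2)] by blast
    have "card VB \<le> f (card V)" using H(4) c by fastforce
    hence le: "card V \<le> m * f (card V)" using H(3) by (simp add: mult.commute)
    have "card VB > 3" using B(2) unfolding k_connected_def by auto
    have "card V \<ge> N0" using H(3) B(3) m by (metis le_trans mult_le_mono2 mult_1_right one_le_numeral le_trans[OF _ mult_le_mono2] nat_mult_1_right order.trans)
    hence lt: "real (f (card V)) / real (card V) < 1 / real m" using N0 by fastforce
    have pos: "real (card V) > 0" using H(3) m \<open>card VB > 3\<close> by simp
    from lt have "real (f (card V)) * real m < real (card V)"
      using pos m by (simp add: field_simps)
    moreover have "real (card V) \<le> real m * real (f (card V))" using le by (metis of_nat_le_iff of_nat_mult)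
    ultimately show False by (simp add: mult.commute)
  qed
qed

end
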